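(* Let $(M,g)$ be a space-time of dimension $n>3$ with smooth vector fields $u,w$ satisfying $u^ku_k=w^kw_k=-1$, $\nabla_iu_j=\varphi(u_iu_j+g_{ij})$ and $\nabla_iw_j=\lambda(w_iw_j+g_{ij})$ for scalar fields $\varphi,\lambda$. Suppose $\nabla_k\varphi=-u_k\,u^m\nabla_m\varphi+v\,b_k$ with $v\neq0$, $b^kb_k=1$, $u^kb_k=0$, and that $w_i=u_i\cosh\alpha+b_i\sinh\alpha$ with $\alpha\neq0$. Then $$\tanh\alpha=-\frac{2R_{ij}u^ib^j}{R_{ij}(u^iu^j+b^ib^j)}.$$
   Context: A space-time is a Lorentzian manifold with metric of signature $(-,+,\dots,+)$; $\nabla$ is its Levi-Civita connection. The Riemann tensor is defined by $[\nabla_i,\nabla_j]X_k=R_{ijkm}X^m$ and the Ricci tensor by $R_{jm}=g^{ik}R_{ijkm}$. *)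

theory Defs
  imports "HOL-Analysis.Analysis"
begin

text \<open>Local-coordinate rendering of Lorentzian geometry on an open set U of R^n.
  Points are x :: real^'n; tensor fields are given by their components
  (index type 'n). Covector fields (lower indices) X :: real^'n => 'n => real.\<close>

definition pd :: "'n::finite \<Rightarrow> (real^'n \<Rightarrow> real) \<Rightarrow> real^'n \<Rightarrow> real" where
  "pd i f x = frechet_derivative f (at x) (axis i 1)"

primrec iter_pd :: "'n::finite list \<Rightarrow> (real^'n \<Rightarrow> real) \<Rightarrow> real^'n \<Rightarrow> real" where
  "iter_pd [] f = f"
| "iter_pd (i # is) f = pd i (iter_pd is f)"

definition Cinf_on :: "(real^'n::finite) set \<Rightarrow> (real^'n \<Rightarrow> real) \<Rightarrow> bool" where
  "Cinf_on U f \<longleftrightarrow> (\<forall>is. iter_pd is f differentiable_on U)"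

definition metric_matrix :: "(real^'n::finite \<Rightarrow> 'n \<Rightarrow> 'n \<Rightarrow> real) \<Rightarrow> real^'n \<Rightarrow> real^'n^'n" where
  "metric_matrix g x = (\<chi> i j. g x i j)"

definition ginv :: "(real^'n::finite \<Rightarrow> 'n \<Rightarrow> 'n \<Rightarrow> real) \<Rightarrow> real^'n \<Rightarrow> 'n \<Rightarrow> 'n \<Rightarrow> real" where
  "ginv g x i j = matrix_inv (metric_matrix g x) $ i $ j"

definition lorentzian_at :: "(real^'n::finite \<Rightarrow> 'n \<Rightarrow> 'n \<Rightarrow> real) \<Rightarrow> real^'n \<Rightarrow> bool" where
  "lorentzian_at g x \<longleftrightarrow> (\<forall>i j. g x i j = g x j i) \<and>
     (\<exists>P::real^'n^'n. \<exists>i0. invertible P \<and>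
        transpose P ** metric_matrix g x ** P
          = (\<chi> i j. if i = j then (if i = i0 then -1 else 1) else 0))"

definition spacetime :: "(real^'n::finite) set \<Rightarrow> (real^'n \<Rightarrow> 'n \<Rightarrow> 'n \<Rightarrow> real) \<Rightarrow> bool" where
  "spacetime U g \<longleftrightarrow> open U \<and> (\<forall>i j. Cinf_on U (\<lambda>x. g x i j)) \<and> (\<forall>x\<in>U. lorentzian_at g x)"

definition christoffel :: "(real^'n::finite \<Rightarrow> 'n \<Rightarrow> 'n \<Rightarrow> real) \<Rightarrow> 'n \<Rightarrow> 'n \<Rightarrow> 'n \<Rightarrow> real^'n \<Rightarrow> real" where
  "christoffel g k i j x = (1/2) * (\<Sum>l\<in>UNIV. ginv g x k l *
      (pd i (\<lambda>y. g y j l) x + pd j (\<lambda>y. g y i l) x - pd l (\<lambda>y. g y i j) x))"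

definition cov1 :: "(real^'n::finite \<Rightarrow> 'n \<Rightarrow> 'n \<Rightarrow> real) \<Rightarrow> (real^'n \<Rightarrow> 'n \<Rightarrow> real) \<Rightarrow> 'n \<Rightarrow> 'n \<Rightarrow> real^'n \<Rightarrow> real" where
  "cov1 g X i j x = pd i (\<lambda>y. X y j) x - (\<Sum>k\<in>UNIV. christoffel g k i j x * X x k)"

definition cov2 :: "(real^'n::finite \<Rightarrow> 'n \<Rightarrow> 'n \<Rightarrow> real) \<Rightarrow> (real^'n \<Rightarrow> 'n \<Rightarrow> real) \<Rightarrow> 'n \<Rightarrow> 'n \<Rightarrow> 'n \<Rightarrow> real^'n \<Rightarrow> real" where
  "cov2 g X i j k x = pd i (\<lambda>y. cov1 g X j k y) x
      - (\<Sum>p\<in>UNIV. christoffel g p i j x * cov1 g X p k x)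
      - (\<Sum>p\<in>UNIV. christoffel g p i k x * cov1 g X j p x)"

text \<open>R_ijk^m defined by [nabla_i, nabla_j] X_k = R_ijk^m X_m, evaluated on the
  coordinate covector fields X_l = delta_lm.\<close>
definition riem_mixed :: "(real^'n::finite \<Rightarrow> 'n \<Rightarrow> 'n \<Rightarrow> real) \<Rightarrow> 'n \<Rightarrow> 'n \<Rightarrow> 'n \<Rightarrow> 'n \<Rightarrow> real^'n \<Rightarrow> real" where
  "riem_mixed g i j k m x =
     cov2 g (\<lambda>y l. if l = m then 1 else 0) i j k x - cov2 g (\<lambda>y l. if l = m then 1 else 0) j i k x"

text \<open>R_ijkm = R_ijk^p g_pm, so that [nabla_i, nabla_j] X_k = R_ijkm X^m.\<close>
definition riem :: "(real^'n::finite \<Rightarrow> 'n \<Rightarrow> 'n \<Rightarrow> real) \<Rightarrow> 'n \<Rightarrow> 'n \<Rightarrow> 'n \<Rightarrow> 'n \<Rightarrow> real^'n \<Rightarrow> real" where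
  "riem g i j k m x = (\<Sum>p\<in>UNIV. g x p m * riem_mixed g i j k p x)"

definition ricci :: "(real^'n::finite \<Rightarrow> 'n \<Rightarrow> 'n \<Rightarrow> real) \<Rightarrow> 'n \<Rightarrow> 'n \<Rightarrow> real^'n \<Rightarrow> real" where
  "ricci g j m x = (\<Sum>i\<in>UNIV. \<Sum>k\<in>UNIV. ginv g x i k * riem g i j k m x)"

definition raise :: "(real^'n::finite \<Rightarrow> 'n \<Rightarrow> 'n \<Rightarrow> real) \<Rightarrow> (real^'n \<Rightarrow> 'n \<Rightarrow> real) \<Rightarrow> real^'n \<Rightarrow> 'n \<Rightarrow> real" where
  "raise g X x i = (\<Sum>k\<in>UNIV. ginv g x i k * X x k)"

definition gdot :: "(real^'n::finite \<Rightarrow> 'n \<Rightarrow> 'n \<Rightarrow> real) \<Rightarrow> real^'n \<Rightarrow> ('n \<Rightarrow> real) \<Rightarrow> ('n \<Rightarrow> real) \<Rightarrow> real" where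
  "gdot g x X Y = (\<Sum>i\<in>UNIV. \<Sum>k\<in>UNIV. ginv g x i k * X i * Y k)"

end

theory Submission
  imports Defs
begin

lemma pd_has: "(f has_derivative f') (at x) \<Longrightarrow> pd i f x = f' (axis i 1)"
  unfolding pd_def by (metis frechet_derivative_at)

lemma pd_works: "f differentiable (at x) \<Longrightarrow> (f has_derivative (\<lambda>h. frechet_derivative f (at x) h)) (at x)"
  using frechet_derivative_works by (metis eta_contract_eq)

lemma pd_local:
  assumes "open U" "x \<in> U" "\<And>y. y \<in> U \<Longrightarrow> f y = g y"
  shows "pd i f x = pd i g x"
proof -
  have "\<And>f'. (f has_derivative f') (at x) = (g has_derivative f') (at x)"
    using has_derivative_transform_within_open[OF _ assms(1,2)] assms(3) by metis
  then show ?thesis unfolding pd_def frechet_derivative_def by simp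
qed

lemma pd_const[simp]: "pd i (\<lambda>y. c) x = 0"
  by (rule pd_has[where f'="\<lambda>h. 0", simplified]) (rule has_derivative_const)

lemma pd_add:
  "f differentiable (at x) \<Longrightarrow> g differentiable (at x) \<Longrightarrow> pd i (\<lambda>y. f y + g y) x = pd i f x + pd i g x"
  by (rule trans[OF pd_has[OF has_derivative_add[OF pd_works pd_works]]]) (auto simp: pd_def)

lemma pd_diff:
  "f differentiable (at x) \<Longrightarrow> g differentiable (at x) \<Longrightarrow> pd i (\<lambda>y. f y - g y) x = pd i f x - pd i g x"
  by (rule trans[OF pd_has[OF has_derivative_diff[OF pd_works pd_works]]]) (auto simp: pd_def)

lemma pd_minus:
  "f differentiable (at x) \<Longrightarrow> pd i (\<lambda>y. - f y) x = - pd i f x"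
  by (rule trans[OF pd_has[OF has_derivative_minus[OF pd_works]]]) (auto simp: pd_def)

lemma pd_mult:
  fixes f g :: "real^'n::finite \<Rightarrow> real"
  shows "f differentiable (at x) \<Longrightarrow> g differentiable (at x) \<Longrightarrow> pd i (\<lambda>y. f y * g y) x = f x * pd i g x + pd i f x * g x"
  by (rule trans[OF pd_has[OF has_derivative_mult[OF pd_works pd_works]]]) (auto simp: pd_def)

lemma pd_cmult:
  fixes f :: "real^'n::finite \<Rightarrow> real"
  shows "f differentiable (at x) \<Longrightarrow> pd i (\<lambda>y. c * f y) x = c * pd i f x"
  using pd_mult[of "\<lambda>y. c" x f i] by simp

lemma pd_sum:
  fixes f :: "'a \<Rightarrow> real^'n::finite \<Rightarrow> real"
  assumes "finite S" "\<And>a. a \<in> S \<Longrightarrow> f a differentiable (at x)"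
  shows "pd i (\<lambda>y. \<Sum>a\<in>S. f a y) x = (\<Sum>a\<in>S. pd i (f a) x)"
  using assms
proof (induction S rule: finite_induct)
  case empty then show ?case by simp
next
  case (insert a S)
  have d: "(\<lambda>y. \<Sum>a\<in>S. f a y) differentiable (at x)"
    using insert by (intro differentiable_sum) auto
  have "pd i (\<lambda>y. \<Sum>a\<in>insert a S. f a y) x = pd i (\<lambda>y. f a y + (\<Sum>a\<in>S. f a y)) x"
    using insert by simp
  also have "\<dots> = pd i (f a) x + pd i (\<lambda>y. \<Sum>a\<in>S. f a y) x"
    using pd_add[OF _ d, of "f a"] insert by (simp add: eta_contract_eq)
  finally show ?case using insert by simp
qed

lemma differentiable_prod_at:
  fixes f :: "'a \<Rightarrow> real^'n::finite \<Rightarrow> real"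
  assumes "\<And>a. a \<in> S \<Longrightarrow> f a differentiable (at x)"
  shows "(\<lambda>y. \<Prod>a\<in>S. f a y) differentiable (at x)"
proof -
  from assms have "\<forall>a\<in>S. \<exists>D. (f a has_derivative D) (at x)" unfolding differentiable_def by blast
  then obtain D where "\<And>a. a \<in> S \<Longrightarrow> (f a has_derivative D a) (at x)" by metis
  then show ?thesis unfolding differentiable_def by (blast intro: has_derivative_prod)
qed

lemma iter_pd_append: "iter_pd (is @ js) f = iter_pd is (iter_pd js f)"
  by (induction "is") auto

lemma Cinf_pd: "Cinf_on U f \<Longrightarrow> Cinf_on U (pd i f)"
  unfolding Cinf_on_def
proof
  fix "is" assume "\<forall>is. iter_pd is f differentiable_on U"
  then have "iter_pd (is @ [i]) f differentiable_on U" by blast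
  then show "iter_pd is (pd i f) differentiable_on U" by (simp add: iter_pd_append)
qed

lemma Cinf_diff: "Cinf_on U f \<Longrightarrow> open U \<Longrightarrow> x \<in> U \<Longrightarrow> f differentiable (at x)"
  unfolding Cinf_on_def using differentiable_on_eq_differentiable_at[of U f]
  by (metis iter_pd.simps(1))



lemma line_deriv:
  fixes f :: "real^'n::finite \<Rightarrow> real"
  assumes "f differentiable (at (a + t *\<^sub>R e))"
  shows "((\<lambda>s. f (a + s *\<^sub>R e)) has_real_derivative frechet_derivative f (at (a + t *\<^sub>R e)) e) (at t)"
proof -
  let ?D = "frechet_derivative f (at (a + t *\<^sub>R e))"
  have 1: "((\<lambda>s. a + s *\<^sub>R e) has_derivative (\<lambda>s. s *\<^sub>R e)) (at t)"
    by (auto intro!: derivative_eq_intros)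
  have 2: "(f has_derivative ?D) (at (a + t *\<^sub>R e))"
    using assms frechet_derivative_works by blast
  have lin: "linear ?D" using assms linear_frechet_derivative by blast
  have 3: "((\<lambda>s. f (a + s *\<^sub>R e)) has_derivative (\<lambda>s. ?D (s *\<^sub>R e))) (at t)"
    using has_derivative_compose[OF 1 2] by simp
  have "(\<lambda>s. ?D (s *\<^sub>R e)) = (*) (?D e)"
    using linear_scale[OF lin] by (auto simp: fun_eq_iff mult.commute)
  then show ?thesis using 3 unfolding has_field_derivative_def by simp
qed

definition Dq :: "(real^'n::finite \<Rightarrow> real) \<Rightarrow> 'n \<Rightarrow> 'n \<Rightarrow> real^'n \<Rightarrow> real \<Rightarrow> real" where
  "Dq f i j x h = f (x + h *\<^sub>R axis j 1 + h *\<^sub>R axis i 1) - f (x + h *\<^sub>R axis j 1)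
      - (f (x + h *\<^sub>R axis i 1) - f x)"

lemma Dq_sym: "Dq f i j x h = Dq f j i x h"
  unfolding Dq_def by (simp add: algebra_simps)

lemma Dq_est:
  fixes f :: "real^'n::finite \<Rightarrow> real"
  assumes U: "open U" "x \<in> U" and fd: "\<And>y. y \<in> U \<Longrightarrow> f differentiable (at y)"
    and gd: "pd i f differentiable (at x)" and e: "e > 0"
  shows "\<exists>d>0. \<forall>h. 0 < h \<and> h < d \<longrightarrow> \<bar>Dq f i j x h - h^2 * pd j (pd i f) x\<bar> \<le> 3 * e * h^2"
proof -
  let ?D = "frechet_derivative (pd i f) (at x)"
  have hd: "(pd i f has_derivative ?D) (at x)" using gd frechet_derivative_works by blast
  have lin: "linear ?D" using gd linear_frechet_derivative by blast
  obtain d1 where d1: "d1 > 0" "\<And>y. norm (y - x) < d1 \<Longrightarrow> \<bar>pd i f y - pd i f x - ?D (y - x)\<bar> \<le> e * norm (y - x)"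
    using hd e unfolding has_derivative_at_alt by (metis real_norm_def)
  obtain d2 where d2: "d2 > 0" "ball x d2 \<subseteq> U" using U open_contains_ball by blast
  define d where "d = min d1 d2 / 3"
  have "d > 0" using d1 d2 by (simp add: d_def)
  moreover have "\<bar>Dq f i j x h - h^2 * pd j (pd i f) x\<bar> \<le> 3 * e * h^2" if h: "0 < h" "h < d" for h
  proof -
    let ?ei = "axis i (1::real) :: real^'n" and ?ej = "axis j (1::real) :: real^'n"
    define a where "a = x + h *\<^sub>R ?ej"
    define F where "F = (\<lambda>t. f (a + t *\<^sub>R ?ei) - f (x + t *\<^sub>R ?ei))"
    have inU: "x + v \<in> U" if "norm v \<le> 2 * h" for v
    proof -
      have "dist x (x + v) < d2" using that h d1 d2 by (simp add: dist_norm d_def)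
      then show ?thesis using d2 by auto
    qed
    have nei: "norm (t *\<^sub>R ?ei) = \<bar>t\<bar>" "norm (t *\<^sub>R ?ej) = \<bar>t\<bar>" for t by auto
    have der: "DERIV F t :> pd i f (a + t *\<^sub>R ?ei) - pd i f (x + t *\<^sub>R ?ei)" if "0 \<le> t" "t \<le> h" for t
    proof -
      have n1: "norm (h *\<^sub>R ?ej + t *\<^sub>R ?ei) \<le> 2 * h"
        using norm_triangle_ineq[of "h *\<^sub>R ?ej" "t *\<^sub>R ?ei"] that h by (simp only: nei)
      have n2: "norm (t *\<^sub>R ?ei) \<le> 2 * h" using that h by (simp only: nei; linarith)
      have "a + t *\<^sub>R ?ei \<in> U" using inU[OF n1] by (simp add: a_def add.assoc)
      moreover have "x + t *\<^sub>R ?ei \<in> U" using inU[OF n2] .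
      ultimately show ?thesis unfolding F_def pd_def
        by (intro DERIV_diff line_deriv fd)
    qed
    obtain z where z: "0 < z" "z < h"
      "F h - F 0 = (h - 0) * (pd i f (a + z *\<^sub>R ?ei) - pd i f (x + z *\<^sub>R ?ei))"
      using MVT2[OF h(1) der] by auto
    have FDq: "F h - F 0 = Dq f i j x h" unfolding F_def Dq_def a_def by simp
    define v1 where "v1 = h *\<^sub>R ?ej + z *\<^sub>R ?ei"
    define v2 where "v2 = z *\<^sub>R ?ei"
    have nv1: "norm v1 \<le> 2 * h"
      using norm_triangle_ineq[of "h *\<^sub>R ?ej" "z *\<^sub>R ?ei"] z h unfolding v1_def by (simp only: nei; linarith)
    have nv2: "norm v2 \<le> h" using z unfolding v2_def by (simp only: nei; linarith)
    have "2 * h < d1" using h d1 d2 by (simp add: d_def)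
    then have r1': "\<bar>pd i f (x + v1) - pd i f x - ?D v1\<bar> \<le> e * norm v1"
      using d1(2)[of "x + v1"] nv1 by simp
    have r1: "\<bar>pd i f (x + v1) - pd i f x - ?D v1\<bar> \<le> e * (2 * h)"
      using r1' mult_left_mono[OF nv1, of e] e by linarith
    have r2': "\<bar>pd i f (x + v2) - pd i f x - ?D v2\<bar> \<le> e * norm v2"
      using d1(2)[of "x + v2"] nv2 \<open>2 * h < d1\<close> h by simp
    have r2: "\<bar>pd i f (x + v2) - pd i f x - ?D v2\<bar> \<le> e * h"
      using r2' mult_left_mono[OF nv2, of e] e by linarith
    have Dj: "pd j (pd i f) x = ?D (axis j 1)" by (rule pd_def)
    have Dlin: "?D v1 - ?D v2 = h * pd j (pd i f) x"
      unfolding v1_def v2_def Dj using linear_add[OF lin] linear_scale[OF lin] by simp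
    have eq1: "a + z *\<^sub>R ?ei = x + v1" unfolding a_def v1_def by (simp add: add.assoc)
    have eq2: "x + z *\<^sub>R ?ei = x + v2" unfolding v2_def by simp
    have "\<bar>(pd i f (a + z *\<^sub>R ?ei) - pd i f (x + z *\<^sub>R ?ei)) - h * pd j (pd i f) x\<bar> \<le> 3 * e * h"
      using r1 r2 Dlin unfolding eq1 eq2 by linarith
    then have "\<bar>h * ((pd i f (a + z *\<^sub>R ?ei) - pd i f (x + z *\<^sub>R ?ei)) - h * pd j (pd i f) x)\<bar> \<le> h * (3 * e * h)"
      using h by (simp add: abs_mult)
    then show ?thesis using z(3) FDq by (simp add: algebra_simps power2_eq_square)
  qed
  ultimately show ?thesis by blast
qed

lemma schwarz_at:
  fixes f :: "real^'n::finite \<Rightarrow> real"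
  assumes U: "open U" "x \<in> U" and fd: "\<And>y. y \<in> U \<Longrightarrow> f differentiable (at y)"
    and gi: "pd i f differentiable (at x)" and gj: "pd j f differentiable (at x)"
  shows "pd j (pd i f) x = pd i (pd j f) x"
proof -
  let ?A = "pd j (pd i f) x" and ?B = "pd i (pd j f) x"
  have *: "\<bar>?A - ?B\<bar> \<le> 6 * e" if e: "e > 0" for e
  proof -
    obtain da where da: "da > 0" "\<And>h. 0 < h \<Longrightarrow> h < da \<Longrightarrow> \<bar>Dq f i j x h - h^2 * ?A\<bar> \<le> 3 * e * h^2"
      using Dq_est[OF U fd gi e, of j] by blast
    obtain db where db: "db > 0" "\<And>h. 0 < h \<Longrightarrow> h < db \<Longrightarrow> \<bar>Dq f j i x h - h^2 * ?B\<bar> \<le> 3 * e * h^2"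
      using Dq_est[OF U fd gj e, of i] by blast
    define h where "h = min da db / 2"
    have h: "0 < h" "h < da" "h < db" using da db by (auto simp: h_def)
    have 1: "\<bar>Dq f i j x h - h^2 * ?A\<bar> \<le> 3 * e * h^2" using da(2)[OF h(1,2)] .
    have 2: "\<bar>Dq f i j x h - h^2 * ?B\<bar> \<le> 3 * e * h^2" using db(2)[OF h(1,3)] Dq_sym[of f i j x h] by simp
    have "\<bar>h^2 * ?A - h^2 * ?B\<bar> \<le> 6 * e * h^2" using 1 2 unfolding abs_le_iff by linarith
    then have "h^2 * \<bar>?A - ?B\<bar> \<le> h^2 * (6 * e)" by (simp add: abs_mult right_diff_distrib[symmetric] mult_ac)
    then show ?thesis using h(1) by simp
  qed
  show ?thesis
  proof (rule ccontr)
    assume "?A \<noteq> ?B"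
    define t where "t = \<bar>?A - ?B\<bar>"
    have p: "t / 12 > 0" using \<open>?A \<noteq> ?B\<close> by (simp add: t_def)
    have "t \<le> 6 * (t / 12)" unfolding t_def by (rule * [OF p[unfolded t_def]])
    then show False using p by linarith
  qed
qed

lemma schwarz_Cinf:
  assumes "Cinf_on U f" "open U" "x \<in> U"
  shows "pd j (pd i f) x = pd i (pd j f) x"
  using assms by (intro schwarz_at[of U]) (auto intro: Cinf_diff Cinf_pd)



lemma lor_sym: "lorentzian_at g x \<Longrightarrow> g x i j = g x j i"
  unfolding lorentzian_at_def by blast

lemma mm_nth[simp]: "metric_matrix g x $ i $ j = g x i j"
  unfolding metric_matrix_def by simp

lemma lor_det: "lorentzian_at g x \<Longrightarrow> det (metric_matrix g x) \<noteq> 0"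
proof -
  assume "lorentzian_at g x"
  then obtain P :: "real^'a^'a" and i0 where
    PD: "transpose P ** metric_matrix g x ** P = (\<chi> i j. if i = j then (if i = i0 then -1 else 1) else 0)"
    unfolding lorentzian_at_def by blast
  let ?D = "(\<chi> i j. if i = j then (if i = i0 then -1 else 1) else 0) :: real^'a^'a"
  have "det ?D = prod (\<lambda>i. ?D$i$i) UNIV" by (rule det_diagonal) simp
  also have "\<dots> \<noteq> 0" by (simp add: prod_zero_iff)
  finally have "det ?D \<noteq> 0" .
  then have "det (transpose P ** metric_matrix g x ** P) \<noteq> 0" using PD by simp
  then show ?thesis by (simp add: det_mul)
qed

lemma lor_inv:
  assumes "lorentzian_at g x"
  shows "metric_matrix g x ** matrix_inv (metric_matrix g x) = mat 1"
    "matrix_inv (metric_matrix g x) ** metric_matrix g x = mat 1"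
proof -
  have "invertible (metric_matrix g x)" using lor_det[OF assms] invertible_det_nz by blast
  then have "\<exists>A'. metric_matrix g x ** A' = mat 1 \<and> A' ** metric_matrix g x = mat 1"
    unfolding invertible_def by blast
  from someI_ex[OF this] show "metric_matrix g x ** matrix_inv (metric_matrix g x) = mat 1"
    "matrix_inv (metric_matrix g x) ** metric_matrix g x = mat 1"
    unfolding matrix_inv_def by blast+
qed

lemma g_ginv:
  assumes "lorentzian_at g x"
  shows "(\<Sum>l\<in>UNIV. g x i l * ginv g x l j) = (if i = j then 1 else 0)"
  using arg_cong[OF lor_inv(1)[OF assms], of "\<lambda>A. A $ i $ j"]
  by (simp add: matrix_matrix_mult_def mat_def ginv_def)

lemma ginv_g:
  assumes "lorentzian_at g x"
  shows "(\<Sum>l\<in>UNIV. ginv g x i l * g x l j) = (if i = j then 1 else 0)"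
  using arg_cong[OF lor_inv(2)[OF assms], of "\<lambda>A. A $ i $ j"]
  by (simp add: matrix_matrix_mult_def mat_def ginv_def)

lemma ginv_sym:
  assumes L: "lorentzian_at g x"
  shows "ginv g x i j = ginv g x j i"
proof -
  let ?M = "metric_matrix g x" let ?B = "matrix_inv ?M"
  have tM: "transpose ?M = ?M" using lor_sym[OF L] by (simp add: vec_eq_iff transpose_def)
  have "transpose ?B ** ?M = transpose ?B ** transpose ?M" using tM by simp
  also have "\<dots> = transpose (?M ** ?B)" by (simp add: matrix_transpose_mul)
  also have "\<dots> = mat 1" using lor_inv(1)[OF L] by simp
  finally have tB: "transpose ?B ** ?M = mat 1" .
  have "transpose ?B = transpose ?B ** (?M ** ?B)" using lor_inv(1)[OF L] by simp
  also have "\<dots> = (transpose ?B ** ?M) ** ?B" by (simp add: matrix_mul_assoc)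
  also have "\<dots> = ?B" using tB by simp
  finally have "transpose ?B = ?B" .
  then have "transpose ?B $ i $ j = ?B $ i $ j" by simp
  then show ?thesis unfolding ginv_def by (simp add: transpose_def)
qed

lemma ginv_cramer:
  assumes L: "lorentzian_at g x"
  shows "ginv g x i k = det (\<chi> a b. if b = i then (if a = k then 1 else 0) else g x a b) / det (metric_matrix g x)"
proof -
  let ?M = "metric_matrix g x" let ?B = "matrix_inv ?M"
  let ?c = "(\<chi> l. ?B $ l $ k)"
  have "?M *v ?c = (\<chi> a. if a = k then 1 else 0)"
    using arg_cong[OF lor_inv(1)[OF L], of "\<lambda>A. \<chi> a. A $ a $ k"]
    by (simp add: matrix_matrix_mult_def matrix_vector_mult_def mat_def)
  then have "?c = (\<chi> k'. det (\<chi> a b. if b = k' then (\<chi> a. if a = k then 1 else 0) $ a else ?M $ a $ b) / det ?M)"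
    using cramer[OF lor_det[OF L]] by blast
  then have "?c $ i = det (\<chi> a b. if b = i then (\<chi> a. if a = k then 1 else 0) $ a else ?M $ a $ b) / det ?M"
    by simp
  moreover have "(\<chi> a b. if b = i then (\<chi> a. if a = k then 1 else 0) $ a else ?M $ a $ b)
     = (\<chi> a b. if b = i then (if a = k then 1 else 0) else g x a b)"
    by (simp add: vec_eq_iff)
  ultimately show ?thesis unfolding ginv_def by simp
qed

lemma diff_if_const: "f differentiable F \<Longrightarrow> (\<lambda>y. if P then c else f y) differentiable F"
  by (cases P) auto

lemma det_differentiable:
  fixes F :: "real^'n::finite \<Rightarrow> 'm::finite \<Rightarrow> 'm \<Rightarrow> real"
  assumes "\<And>a b. (\<lambda>y. F y a b) differentiable (at x)"
  shows "(\<lambda>y. det (\<chi> a b. F y a b)) differentiable (at x)"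
  unfolding det_def
  by (auto intro!: differentiable_sum differentiable_mult differentiable_prod_at assms
      simp: finite_permutations)

lemma ginv_differentiable:
  assumes st: "spacetime U g" and x: "x \<in> U"
  shows "(\<lambda>y. ginv g y i k) differentiable (at x)"
proof -
  have oU: "open U" using st unfolding spacetime_def by blast
  have gd: "(\<lambda>y. g y a b) differentiable (at y)" if "y \<in> U" for a b y
    using st that oU unfolding spacetime_def by (blast intro: Cinf_diff)
  let ?N = "\<lambda>y. det (\<chi> a b. if b = i then (if a = k then 1 else 0) else g y a b)"
  let ?D = "\<lambda>y. det (\<chi> a b. g y a b)"
  have mm: "metric_matrix g y = (\<chi> a b. g y a b)" for y unfolding metric_matrix_def ..
  have eq: "ginv g y i k = ?N y * inverse (?D y)" if "y \<in> U" for y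
    using ginv_cramer[of g y i k] st that unfolding spacetime_def mm by (simp add: divide_inverse)
  have Dnz: "?D x \<noteq> 0" using lor_det[of g x] st x unfolding spacetime_def mm by blast
  have "(\<lambda>y. ?N y * inverse (?D y)) differentiable (at x)"
    by (intro differentiable_mult differentiable_inverse det_differentiable Dnz)
       (auto intro!: gd[OF x] diff_if_const)
  then obtain D' where "((\<lambda>y. ?N y * inverse (?D y)) has_derivative D') (at x)"
    unfolding differentiable_def by blast
  then have "((\<lambda>y. ginv g y i k) has_derivative D') (at x)"
    by (rule has_derivative_transform_within_open[OF _ oU x]) (simp add: eq)
  then show ?thesis unfolding differentiable_def by blast
qed



definition Gl :: "(real^'n::finite \<Rightarrow> 'n \<Rightarrow> 'n \<Rightarrow> real) \<Rightarrow> 'n \<Rightarrow> 'n \<Rightarrow> 'n \<Rightarrow> real^'n \<Rightarrow> real" where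
  "Gl g i j m x = (1/2) * (pd i (\<lambda>y. g y j m) x + pd j (\<lambda>y. g y i m) x - pd m (\<lambda>y. g y i j) x)"

lemma chr_Gl: "christoffel g k i j x = (\<Sum>l\<in>UNIV. ginv g x k l * Gl g i j l x)"
  unfolding christoffel_def Gl_def by (simp add: sum_distrib_left mult_ac)

locale st_ctx =
  fixes U :: "(real^'n::finite) set" and g :: "real^'n \<Rightarrow> 'n \<Rightarrow> 'n \<Rightarrow> real"
  assumes st: "spacetime U g"
begin

lemma oU: "open U" using st unfolding spacetime_def by blast
lemma lor: "y \<in> U \<Longrightarrow> lorentzian_at g y" using st unfolding spacetime_def by blast
lemma gsym: "y \<in> U \<Longrightarrow> g y i j = g y j i" using lor lor_sym by blast
lemma gCinf: "Cinf_on U (\<lambda>y. g y i j)" using st unfolding spacetime_def by blast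
lemma gdiff: "y \<in> U \<Longrightarrow> (\<lambda>y. g y i j) differentiable (at y)" using gCinf Cinf_diff oU by blast
lemma dgdiff: "y \<in> U \<Longrightarrow> pd l (\<lambda>y. g y i j) differentiable (at y)" using gCinf Cinf_diff oU Cinf_pd by blast

lemma dgsym: "y \<in> U \<Longrightarrow> pd l (\<lambda>y. g y i j) y = pd l (\<lambda>y. g y j i) y"
  by (rule pd_local[OF oU], assumption, rule gsym)

lemma Gl_sym: "y \<in> U \<Longrightarrow> Gl g i j m y = Gl g j i m y"
  unfolding Gl_def using dgsym by simp

lemma chr_sym: "y \<in> U \<Longrightarrow> christoffel g k i j y = christoffel g k j i y"
  unfolding chr_Gl using Gl_sym by simp

lemma dg_Gl: "y \<in> U \<Longrightarrow> pd i (\<lambda>y. g y p m) y = Gl g i p m y + Gl g i m p y"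
  unfolding Gl_def using dgsym[of y] by (simp add: algebra_simps)

lemma g_chr: "y \<in> U \<Longrightarrow> (\<Sum>p\<in>UNIV. g y p m * christoffel g p j k y) = Gl g j k m y"
proof -
  assume y: "y \<in> U"
  have "(\<Sum>p\<in>UNIV. g y p m * christoffel g p j k y) = (\<Sum>p\<in>UNIV. \<Sum>l\<in>UNIV. g y m p * ginv g y p l * Gl g j k l y)"
    unfolding chr_Gl using gsym[OF y] by (simp add: sum_distrib_left mult_ac)
  also have "\<dots> = (\<Sum>l\<in>UNIV. (\<Sum>p\<in>UNIV. g y m p * ginv g y p l) * Gl g j k l y)"
    by (subst sum.swap) (simp add: sum_distrib_right)
  also have "\<dots> = (\<Sum>l\<in>UNIV. (if m = l then Gl g j k l y else 0))"
    by (rule sum.cong) (simp_all add: g_ginv[OF lor[OF y]])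
  also have "\<dots> = Gl g j k m y" by simp
  finally show ?thesis .
qed

lemma ginv_diff: "y \<in> U \<Longrightarrow> (\<lambda>y. ginv g y i k) differentiable (at y)"
  using ginv_differentiable[OF st] by blast

lemma Gl_diff: "y \<in> U \<Longrightarrow> (\<lambda>y. Gl g i j m y) differentiable (at y)"
  unfolding Gl_def by (intro differentiable_mult differentiable_add differentiable_diff differentiable_const;
      rule dgdiff[unfolded eta_contract_eq])

lemma chr_diff: assumes y: "y \<in> U" shows "(\<lambda>y. christoffel g k i j y) differentiable (at y)"
  unfolding chr_Gl by (intro differentiable_sum ballI differentiable_mult ginv_diff[OF y] Gl_diff[OF y]) simp

lemma dGl_sym: "y \<in> U \<Longrightarrow> pd l (Gl g a b m) y = pd l (Gl g b a m) y"
  by (rule pd_local[OF oU], assumption, rule Gl_sym)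

lemma chr_diff': "y \<in> U \<Longrightarrow> christoffel g k i j differentiable (at y)"
  using chr_diff by (simp add: eta_contract_eq)

lemma Gl_diff': "y \<in> U \<Longrightarrow> Gl g i j m differentiable (at y)"
  using Gl_diff by (simp add: eta_contract_eq)

end

lemma sum_delta_r: "(\<Sum>k\<in>UNIV. f k * (if k = m then 1 else 0)) = (f (m::'n::finite) :: real)"
proof -
  have "(\<Sum>k\<in>UNIV. f k * (if k = m then 1 else 0)) = (\<Sum>k\<in>UNIV. if k = m then f k else 0)"
    by (rule sum.cong) auto
  then show ?thesis by simp
qed

lemma sum_delta_l: "(\<Sum>k\<in>UNIV. (if m = k then 1 else 0) * f k) = (f (m::'n::finite) :: real)"
proof -
  have "(\<Sum>k\<in>UNIV. (if m = k then 1 else 0) * f k) = (\<Sum>k\<in>UNIV. if m = k then f k else 0)"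
    by (rule sum.cong) auto
  then show ?thesis by simp
qed

context st_ctx begin

lemma cov1_delta: "cov1 g (\<lambda>y l. if l = m then 1 else 0) j k = (\<lambda>y. - christoffel g m j k y)"
  unfolding cov1_def by (simp add: fun_eq_iff sum_delta_r)

lemma cov2_delta:
  assumes x: "x \<in> U"
  shows "cov2 g (\<lambda>y l. if l = m then 1 else 0) i j k x =
     - pd i (christoffel g m j k) x + (\<Sum>p\<in>UNIV. christoffel g p i j x * christoffel g m p k x)
     + (\<Sum>p\<in>UNIV. christoffel g p i k x * christoffel g m j p x)"
  unfolding cov2_def cov1_delta using pd_minus[OF chr_diff'[OF x]]
  by (simp add: sum_negf)

lemma rm_formula:
  assumes x: "x \<in> U"
  shows "riem_mixed g i j k m x =
     - pd i (christoffel g m j k) x + pd j (christoffel g m i k) x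
     + (\<Sum>p\<in>UNIV. christoffel g p i k x * christoffel g m j p x)
     - (\<Sum>p\<in>UNIV. christoffel g p j k x * christoffel g m i p x)"
  unfolding riem_mixed_def cov2_delta[OF x] using chr_sym[OF x] by simp

definition Qf :: "'n \<Rightarrow> 'n \<Rightarrow> 'n \<Rightarrow> 'n \<Rightarrow> real^'n \<Rightarrow> real" where
  "Qf a b c d x = (\<Sum>p\<in>UNIV. christoffel g p a b x * Gl g c d p x)"

lemma Qf_sym: assumes x: "x \<in> U" shows "Qf a b c d x = Qf c d a b x"
proof -
  have "Qf a b c d x = (\<Sum>p\<in>UNIV. \<Sum>l\<in>UNIV. ginv g x p l * Gl g a b l x * Gl g c d p x)"
    unfolding Qf_def chr_Gl by (simp add: sum_distrib_right)
  also have "\<dots> = (\<Sum>l\<in>UNIV. \<Sum>p\<in>UNIV. ginv g x p l * Gl g a b l x * Gl g c d p x)"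
    by (rule sum.swap)
  also have "\<dots> = (\<Sum>l\<in>UNIV. \<Sum>p\<in>UNIV. ginv g x l p * Gl g a b l x * Gl g c d p x)"
    by (intro sum.cong refl, subst ginv_sym[OF lor[OF x]], rule refl)
  also have "\<dots> = Qf c d a b x"
    unfolding Qf_def chr_Gl by (simp add: sum_distrib_right sum_distrib_left mult_ac)
  finally show ?thesis .
qed

lemma Qf_sym1: assumes x: "x \<in> U" shows "Qf a b c d x = Qf b a c d x"
  unfolding Qf_def using chr_sym[OF x] by simp

lemma g_dchr:
  assumes x: "x \<in> U"
  shows "(\<Sum>p\<in>UNIV. g x p m * pd i (christoffel g p j k) x)
       = pd i (Gl g j k m) x - (\<Sum>p\<in>UNIV. pd i (\<lambda>y. g y p m) x * christoffel g p j k x)"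
proof -
  have "pd i (\<lambda>y. \<Sum>p\<in>UNIV. g y p m * christoffel g p j k y) x = pd i (Gl g j k m) x"
    by (rule pd_local[OF oU x]) (rule g_chr)
  moreover have "pd i (\<lambda>y. \<Sum>p\<in>UNIV. g y p m * christoffel g p j k y) x
      = (\<Sum>p\<in>UNIV. g x p m * pd i (christoffel g p j k) x + pd i (\<lambda>y. g y p m) x * christoffel g p j k x)"
  proof -
    have "pd i (\<lambda>y. \<Sum>p\<in>UNIV. g y p m * christoffel g p j k y) x
        = (\<Sum>p\<in>UNIV. pd i (\<lambda>y. g y p m * christoffel g p j k y) x)"
      by (rule pd_sum) (auto intro!: differentiable_mult gdiff[OF x] chr_diff[OF x])
    also have "\<dots> = (\<Sum>p\<in>UNIV. g x p m * pd i (christoffel g p j k) x + pd i (\<lambda>y. g y p m) x * christoffel g p j k x)"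
      by (rule sum.cong[OF refl], rule pd_mult[OF gdiff[OF x] chr_diff[OF x], simplified eta_contract_eq])
    finally show ?thesis .
  qed
  ultimately show ?thesis by (simp add: sum.distrib)
qed

lemma riem_formula:
  assumes x: "x \<in> U"
  shows "riem g i j k m x = - pd i (Gl g j k m) x + pd j (Gl g i k m) x + Qf j k i m x - Qf i k j m x"
proof -
  let ?c = "\<lambda>p a b. christoffel g p a b x"
  have 1: "riem g i j k m x =
     - (\<Sum>p\<in>UNIV. g x p m * pd i (christoffel g p j k) x) + (\<Sum>p\<in>UNIV. g x p m * pd j (christoffel g p i k) x)
     + (\<Sum>p\<in>UNIV. g x p m * (\<Sum>q\<in>UNIV. ?c q i k * ?c p j q))
     - (\<Sum>p\<in>UNIV. g x p m * (\<Sum>q\<in>UNIV. ?c q j k * ?c p i q))"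
    unfolding riem_def rm_formula[OF x]
    by (simp add: algebra_simps sum.distrib sum_subtractf sum_negf)
  have sw: "(\<Sum>p\<in>UNIV. g x p m * (\<Sum>q\<in>UNIV. ?c q a b * ?c p d q)) = (\<Sum>q\<in>UNIV. ?c q a b * Gl g d q m x)" for a b d
  proof -
    have "(\<Sum>p\<in>UNIV. g x p m * (\<Sum>q\<in>UNIV. ?c q a b * ?c p d q)) = (\<Sum>p\<in>UNIV. \<Sum>q\<in>UNIV. ?c q a b * (g x p m * ?c p d q))"
      by (simp add: sum_distrib_left mult_ac)
    also have "\<dots> = (\<Sum>q\<in>UNIV. \<Sum>p\<in>UNIV. ?c q a b * (g x p m * ?c p d q))" by (rule sum.swap)
    also have "\<dots> = (\<Sum>q\<in>UNIV. ?c q a b * Gl g d q m x)"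
      by (simp add: sum_distrib_left[symmetric] g_chr[OF x])
    finally show ?thesis .
  qed
  have dg: "(\<Sum>p\<in>UNIV. pd a (\<lambda>y. g y p m) x * ?c p b k) = (\<Sum>p\<in>UNIV. Gl g a p m x * ?c p b k) + (\<Sum>p\<in>UNIV. Gl g a m p x * ?c p b k)" for a b
    by (simp add: dg_Gl[OF x] algebra_simps sum.distrib)
  show ?thesis
    unfolding 1 g_dchr[OF x] sw dg Qf_def
    by (simp add: algebra_simps)
qed

lemma riem_antisym_ij: "riem g i j k m x = - riem g j i k m x"
  unfolding riem_def riem_mixed_def by (simp add: algebra_simps sum_subtractf sum_negf)

lemma riem_antisym_km:
  assumes x: "x \<in> U"
  shows "riem g i j k m x = - riem g i j m k x"
proof -
  have a: "pd a (Gl g b k m) x + pd a (Gl g b m k) x = pd a (pd b (\<lambda>y. g y k m)) x" for a b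
  proof -
    have "pd a (Gl g b k m) x + pd a (Gl g b m k) x = pd a (\<lambda>y. Gl g b k m y + Gl g b m k y) x"
      using pd_add[OF Gl_diff'[OF x] Gl_diff'[OF x]] by simp
    also have "\<dots> = pd a (pd b (\<lambda>y. g y k m)) x"
      by (rule pd_local[OF oU x]) (simp add: dg_Gl)
    finally show ?thesis .
  qed
  have s: "pd i (pd j (\<lambda>y. g y k m)) x = pd j (pd i (\<lambda>y. g y k m)) x"
    by (rule schwarz_Cinf[OF gCinf oU x])
  show ?thesis
    unfolding riem_formula[OF x] using a[of i j] a[of j i] s Qf_sym[OF x, of j m i k] Qf_sym[OF x, of i m j k]
    by (simp add: algebra_simps)
qed

lemma riem_bianchi:
  assumes x: "x \<in> U"
  shows "riem g i j k m x + riem g j k i m x + riem g k i j m x = 0"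
  unfolding riem_formula[OF x]
  using dGl_sym[OF x, of i k j m] dGl_sym[OF x, of j k i m] dGl_sym[OF x, of k j i m]
    Qf_sym1[OF x, of k i j m] Qf_sym1[OF x, of j i k m] Qf_sym1[OF x, of k j i m]
  by (simp add: algebra_simps)

end

lemma pair_sym_abs:
  fixes R :: "'n \<Rightarrow> 'n \<Rightarrow> 'n \<Rightarrow> 'n \<Rightarrow> real"
  assumes a1: "\<And>i j k m. R i j k m = - R j i k m"
    and a2: "\<And>i j k m. R i j k m = - R i j m k"
    and b: "\<And>i j k m. R i j k m + R j k i m + R k i j m = 0"
  shows "R i j k m = R k m i j"
proof -
  have "R k i m j + R i m k j + R m k i j = 0" using b[of k i m j] .
  moreover have "R i m j k + R m j i k + R j i m k = 0" using b[of i m j k] .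
  moreover have "R m j k i + R j k m i + R k m j i = 0" using b[of m j k i] .
  moreover have "R j k i m + R k i j m + R i j k m = 0" using b[of j k i m] .
  ultimately show ?thesis
    using a2[of k i m j] a2[of i m k j] a2[of m j i k] a2[of j k m i]
      a1[of m k i j] a2[of k m j i] a1[of j i m k] a2[of i j m k]
    by linarith
qed



context st_ctx begin

lemma cov1_expand: "cov1 g X j k y = pd j (\<lambda>y. X y k) y - (\<Sum>p\<in>UNIV. christoffel g p j k y * X y p)"
  unfolding cov1_def ..

lemma pd_cov1:
  assumes x: "x \<in> U" and XC: "\<And>k. Cinf_on U (\<lambda>y. X y k)"
  shows "pd i (cov1 g X j k) x = pd i (pd j (\<lambda>y. X y k)) x
     - (\<Sum>p\<in>UNIV. christoffel g p j k x * pd i (\<lambda>y. X y p) x)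
     - (\<Sum>p\<in>UNIV. pd i (christoffel g p j k) x * X x p)"
proof -
  have Xd: "(\<lambda>y. X y p) differentiable (at x)" for p using XC Cinf_diff oU x by blast
  have dXd: "pd j (\<lambda>y. X y k) differentiable (at x)" using XC Cinf_diff oU x Cinf_pd by blast
  have sd: "(\<lambda>y. \<Sum>p\<in>UNIV. christoffel g p j k y * X y p) differentiable (at x)"
    by (intro differentiable_sum ballI differentiable_mult chr_diff[OF x] Xd) simp
  have "pd i (cov1 g X j k) x = pd i (\<lambda>y. pd j (\<lambda>y. X y k) y - (\<Sum>p\<in>UNIV. christoffel g p j k y * X y p)) x"
    unfolding cov1_def ..
  also have "\<dots> = pd i (pd j (\<lambda>y. X y k)) x - pd i (\<lambda>y. \<Sum>p\<in>UNIV. christoffel g p j k y * X y p) x"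
    using pd_diff[OF dXd sd] by (simp add: eta_contract_eq)
  also have "pd i (\<lambda>y. \<Sum>p\<in>UNIV. christoffel g p j k y * X y p) x
      = (\<Sum>p\<in>UNIV. pd i (\<lambda>y. christoffel g p j k y * X y p) x)"
    by (rule pd_sum) (auto intro!: differentiable_mult chr_diff[OF x] Xd)
  also have "\<dots> = (\<Sum>p\<in>UNIV. christoffel g p j k x * pd i (\<lambda>y. X y p) x + pd i (christoffel g p j k) x * X x p)"
    by (rule sum.cong[OF refl], rule pd_mult[OF chr_diff[OF x] Xd, simplified eta_contract_eq])
  finally show ?thesis by (simp add: sum.distrib)
qed

lemma cov2_expand:
  assumes x: "x \<in> U" and XC: "\<And>k. Cinf_on U (\<lambda>y. X y k)"
  shows "cov2 g X i j k x = pd i (pd j (\<lambda>y. X y k)) x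
     - (\<Sum>p\<in>UNIV. christoffel g p j k x * pd i (\<lambda>y. X y p) x)
     - (\<Sum>p\<in>UNIV. pd i (christoffel g p j k) x * X x p)
     - (\<Sum>p\<in>UNIV. christoffel g p i j x * cov1 g X p k x)
     - (\<Sum>p\<in>UNIV. christoffel g p i k x * pd j (\<lambda>y. X y p) x)
     + (\<Sum>p\<in>UNIV. christoffel g p i k x * (\<Sum>q\<in>UNIV. christoffel g q j p x * X x q))"
proof -
  have "(\<Sum>p\<in>UNIV. christoffel g p i k x * cov1 g X j p x)
     = (\<Sum>p\<in>UNIV. christoffel g p i k x * pd j (\<lambda>y. X y p) x)
     - (\<Sum>p\<in>UNIV. christoffel g p i k x * (\<Sum>q\<in>UNIV. christoffel g q j p x * X x q))"
    unfolding cov1_expand by (simp add: right_diff_distrib sum_subtractf)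
  then show ?thesis unfolding cov2_def pd_cov1[OF x XC] by simp
qed

lemma ricci_identity:
  assumes x: "x \<in> U" and XC: "\<And>k. Cinf_on U (\<lambda>y. X y k)"
  shows "cov2 g X i j k x - cov2 g X j i k x = (\<Sum>m\<in>UNIV. riem_mixed g i j k m x * X x m)"
proof -
  let ?c = "\<lambda>p a b. christoffel g p a b x"
  have s: "pd i (pd j (\<lambda>y. X y k)) x = pd j (pd i (\<lambda>y. X y k)) x"
    by (rule schwarz_Cinf[OF XC oU x])
  have t: "(\<Sum>p\<in>UNIV. ?c p i j * cov1 g X p k x) = (\<Sum>p\<in>UNIV. ?c p j i * cov1 g X p k x)"
    using chr_sym[OF x] by simp
  have c: "(\<Sum>m\<in>UNIV. (\<Sum>p\<in>UNIV. ?c p a k * ?c m b p) * X x m) = (\<Sum>p\<in>UNIV. ?c p a k * (\<Sum>q\<in>UNIV. ?c q b p * X x q))" for a b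
  proof -
    have "(\<Sum>m\<in>UNIV. (\<Sum>p\<in>UNIV. ?c p a k * ?c m b p) * X x m) = (\<Sum>m\<in>UNIV. \<Sum>p\<in>UNIV. ?c p a k * (?c m b p * X x m))"
      by (simp add: sum_distrib_right sum_distrib_left mult_ac)
    also have "\<dots> = (\<Sum>p\<in>UNIV. \<Sum>m\<in>UNIV. ?c p a k * (?c m b p * X x m))" by (rule sum.swap)
    also have "\<dots> = (\<Sum>p\<in>UNIV. ?c p a k * (\<Sum>q\<in>UNIV. ?c q b p * X x q))" by (simp add: sum_distrib_left)
    finally show ?thesis .
  qed
  have r: "(\<Sum>m\<in>UNIV. riem_mixed g i j k m x * X x m) =
      - (\<Sum>m\<in>UNIV. pd i (christoffel g m j k) x * X x m) + (\<Sum>m\<in>UNIV. pd j (christoffel g m i k) x * X x m)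
      + (\<Sum>m\<in>UNIV. (\<Sum>p\<in>UNIV. ?c p i k * ?c m j p) * X x m)
      - (\<Sum>m\<in>UNIV. (\<Sum>p\<in>UNIV. ?c p j k * ?c m i p) * X x m)"
    unfolding rm_formula[OF x] by (simp add: algebra_simps sum.distrib sum_subtractf sum_negf)
  show ?thesis
    unfolding r c cov2_expand[OF x XC] using s t by simp
qed

lemma torse_cov2:
  assumes x: "x \<in> U" and uC: "\<And>k. Cinf_on U (\<lambda>y. u y k)" and pC: "Cinf_on U phi"
    and tf: "\<forall>y\<in>U. \<forall>i j. cov1 g u i j y = phi y * (u y i * u y j + g y i j)"
  shows "cov2 g u i j k x = pd i phi x * (u x j * u x k + g x j k)
      + (phi x)^2 * ((u x i * u x j + g x i j) * u x k + u x j * (u x i * u x k + g x i k))"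
proof -
  let ?c = "\<lambda>p a b. christoffel g p a b x"
  have ud: "(\<lambda>y. u y p) differentiable (at x)" for p using uC Cinf_diff oU x by blast
  have pdf: "phi differentiable (at x)" using pC Cinf_diff oU x by blast
  have hd: "(\<lambda>y. u y j * u y k + g y j k) differentiable (at x)"
    by (intro differentiable_add differentiable_mult ud gdiff[OF x])
  have "pd i (cov1 g u j k) x = pd i (\<lambda>y. phi y * (u y j * u y k + g y j k)) x"
    by (rule pd_local[OF oU x]) (use tf in blast)
  also have "\<dots> = phi x * pd i (\<lambda>y. u y j * u y k + g y j k) x + pd i phi x * (u x j * u x k + g x j k)"
    using pd_mult[OF pdf hd] by simp
  also have "pd i (\<lambda>y. u y j * u y k + g y j k) x
     = u x j * pd i (\<lambda>y. u y k) x + pd i (\<lambda>y. u y j) x * u x k + pd i (\<lambda>y. g y j k) x"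
    using pd_add[OF differentiable_mult[OF ud ud] gdiff[OF x], of i] pd_mult[OF ud ud, of i] by simp
  finally have e1: "pd i (cov1 g u j k) x = phi x * (u x j * pd i (\<lambda>y. u y k) x + pd i (\<lambda>y. u y j) x * u x k + pd i (\<lambda>y. g y j k) x)
      + pd i phi x * (u x j * u x k + g x j k)" .
  have du: "pd i (\<lambda>y. u y a) x = phi x * (u x i * u x a + g x i a) + (\<Sum>p\<in>UNIV. ?c p i a * u x p)" for a
    using tf x cov1_expand[of u i a x] by simp
  have s1: "(\<Sum>p\<in>UNIV. ?c p i j * cov1 g u p k x) = phi x * ((\<Sum>p\<in>UNIV. ?c p i j * u x p) * u x k + Gl g i j k x)"
  proof -
    have "(\<Sum>p\<in>UNIV. ?c p i j * cov1 g u p k x) = (\<Sum>p\<in>UNIV. phi x * (?c p i j * u x p * u x k + g x p k * ?c p i j))"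
      using tf x by (intro sum.cong refl) (simp add: algebra_simps)
    also have "\<dots> = phi x * ((\<Sum>p\<in>UNIV. ?c p i j * u x p) * u x k + (\<Sum>p\<in>UNIV. g x p k * ?c p i j))"
      by (simp add: sum_distrib_left[symmetric] sum_distrib_right sum.distrib)
    finally show ?thesis using g_chr[OF x, of k i j] by simp
  qed
  have s2: "(\<Sum>p\<in>UNIV. ?c p i k * cov1 g u j p x) = phi x * (u x j * (\<Sum>p\<in>UNIV. ?c p i k * u x p) + Gl g i k j x)"
  proof -
    have "(\<Sum>p\<in>UNIV. ?c p i k * cov1 g u j p x) = (\<Sum>p\<in>UNIV. phi x * (u x j * (?c p i k * u x p) + g x p j * ?c p i k))"
      using tf x gsym[OF x] by (intro sum.cong refl) (simp add: algebra_simps)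
    also have "\<dots> = phi x * (u x j * (\<Sum>p\<in>UNIV. ?c p i k * u x p) + (\<Sum>p\<in>UNIV. g x p j * ?c p i k))"
      by (simp add: sum_distrib_left[symmetric] sum.distrib)
    finally show ?thesis using g_chr[OF x, of j i k] by simp
  qed
  show ?thesis
    unfolding cov2_def e1 s1 s2 du dg_Gl[OF x] by (simp add: algebra_simps power2_eq_square)
qed

lemma torse_T:
  assumes x: "x \<in> U" and uC: "\<And>k. Cinf_on U (\<lambda>y. u y k)" and pC: "Cinf_on U phi"
    and tf: "\<forall>y\<in>U. \<forall>i j. cov1 g u i j y = phi y * (u y i * u y j + g y i j)"
  shows "(\<Sum>m\<in>UNIV. riem_mixed g i j k m x * u x m) =
     pd i phi x * (u x j * u x k + g x j k) - pd j phi x * (u x i * u x k + g x i k)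
     + (phi x)^2 * (u x j * g x i k - u x i * g x j k)"
  unfolding ricci_identity[OF x uC, symmetric] torse_cov2[OF x uC pC tf]
  using gsym[OF x, of i j] by (simp add: algebra_simps power2_eq_square)

end



locale pt =
  fixes G Gi :: "'n::finite \<Rightarrow> 'n \<Rightarrow> real"
  assumes Gsym: "G i j = G j i" and Gisym: "Gi i j = Gi j i"
    and GGi: "(\<Sum>l\<in>UNIV. G i l * Gi l j) = (if i = j then 1 else 0)"
begin

definition Cn :: "('n \<Rightarrow> real) \<Rightarrow> ('n \<Rightarrow> real) \<Rightarrow> real" where
  "Cn Y F = (\<Sum>j\<in>UNIV. \<Sum>k\<in>UNIV. Gi j k * Y k * F j)"

definition Tr :: "('n \<Rightarrow> 'n \<Rightarrow> real) \<Rightarrow> real" where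
  "Tr M = (\<Sum>i\<in>UNIV. \<Sum>k\<in>UNIV. Gi i k * M i k)"

lemma GiG: "(\<Sum>l\<in>UNIV. Gi i l * G l j) = (if i = j then 1 else 0)"
  using GGi[of j i] by (simp add: Gsym Gisym mult.commute eq_commute)

lemma Cn_comm: "Cn Y F = Cn F Y"
  unfolding Cn_def by (subst sum.swap) (simp add: Gisym mult_ac)

lemma Cn_add: "Cn Y (\<lambda>j. F j + H j) = Cn Y F + Cn Y H"
  unfolding Cn_def by (simp add: algebra_simps sum.distrib)
lemma Cn_diff: "Cn Y (\<lambda>j. F j - H j) = Cn Y F - Cn Y H"
  unfolding Cn_def by (simp add: algebra_simps sum_subtractf)
lemma Cn_cmult: "Cn Y (\<lambda>j. c * F j) = c * Cn Y F"
  unfolding Cn_def sum_distrib_left by (simp add: mult_ac)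
lemma Cn_multc: "Cn Y (\<lambda>j. F j * c) = Cn Y F * c"
  unfolding Cn_def sum_distrib_right by (simp add: mult_ac)
lemma Cn_minus: "Cn Y (\<lambda>j. - F j) = - Cn Y F"
  unfolding Cn_def by (simp add: sum_negf)
lemma Cn_zero: "Cn Y (\<lambda>j. 0) = 0"
  unfolding Cn_def by simp
lemma Cn_left_lin: "Cn (\<lambda>k. a * Y k + b * Z k) F = a * Cn Y F + b * Cn Z F"
  unfolding Cn_def by (simp add: algebra_simps sum.distrib sum_distrib_left)

lemma Cn_G: "Cn Y (\<lambda>j. G j k) = Y k"
proof -
  have "Cn Y (\<lambda>j. G j k) = (\<Sum>k'\<in>UNIV. Y k' * (\<Sum>j\<in>UNIV. Gi k' j * G j k))"
    unfolding Cn_def by (subst sum.swap) (simp add: sum_distrib_left Gisym mult_ac)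
  also have "\<dots> = (\<Sum>k'\<in>UNIV. if k' = k then Y k' else 0)"
    by (rule sum.cong) (simp_all add: GiG)
  finally show ?thesis by simp
qed

lemma Cn_G': "Cn Y (G k) = Y k"
proof -
  have "(\<lambda>j. G j k) = G k" by (rule ext) (rule Gsym)
  then show ?thesis using Cn_G[of Y k] by simp
qed

lemma Cn_G'': "Cn (G k) Y = Y k"
  using Cn_G' Cn_comm by metis

lemma Tr_add: "Tr (\<lambda>i k. M i k + N i k) = Tr M + Tr N"
  unfolding Tr_def by (simp add: algebra_simps sum.distrib)
lemma Tr_diff: "Tr (\<lambda>i k. M i k - N i k) = Tr M - Tr N"
  unfolding Tr_def by (simp add: algebra_simps sum_subtractf)
lemma Tr_cmult: "Tr (\<lambda>i k. c * M i k) = c * Tr M"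
  unfolding Tr_def by (simp add: algebra_simps sum_distrib_left)
lemma Tr_prod: "Tr (\<lambda>i k. A i * B k) = Cn B A"
  unfolding Tr_def Cn_def by (simp add: mult_ac)
lemma Tr_G: "Tr (\<lambda>i k. G i k) = real CARD('n)"
  unfolding Tr_def using GiG by (simp add: Gsym)
lemma Tr_AG: "Tr (\<lambda>i k. A i * G j k) = A j"
proof -
  have "Tr (\<lambda>i k. A i * G j k) = Cn A (G j)"
    unfolding Tr_def Cn_def by (subst sum.swap) (simp add: Gisym mult_ac)
  then show ?thesis by (simp add: Cn_G')
qed
lemma Tr_GA: "Tr (\<lambda>i k. G j i * A k) = A j"
proof -
  have "Tr (\<lambda>i k. G j i * A k) = Cn A (G j)"
    unfolding Tr_def Cn_def by (simp add: mult_ac)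
  then show ?thesis by (simp add: Cn_G')
qed

lemma Tr_T:
  "Tr (\<lambda>i k. A i * (Y j * Y k + G j k) - A j * (Y i * Y k + G i k) + c * (Y j * G i k - Y i * G j k))
   = Y j * Cn Y A + A j - A j * (Cn Y Y + real CARD('n)) + c * (real CARD('n) - 1) * Y j"
proof -
  have e: "(\<lambda>i k. A i * (Y j * Y k + G j k) - A j * (Y i * Y k + G i k) + c * (Y j * G i k - Y i * G j k))
    = (\<lambda>i k. (Y j * (A i * Y k) + A i * G j k) - (A j * (Y i * Y k) + A j * G i k) + ((c * Y j) * G i k - c * (Y i * G j k)))"
    by (simp add: fun_eq_iff algebra_simps)
  show ?thesis
    unfolding e by (simp only: Tr_add Tr_diff Tr_cmult Tr_prod Tr_G Tr_AG Cn_G'') (simp add: algebra_simps)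
qed

lemma Cn3_T:
  fixes X Y Z :: "'n \<Rightarrow> real"
  shows "Cn X (\<lambda>i. Cn Y (\<lambda>j. Cn Z (\<lambda>k. A i * (V j * V k + G j k) - A j * (V i * V k + G i k) + c * (V j * G i k - V i * G j k))))
   = Cn X A * (Cn Y Z + Cn Y V * Cn Z V) - Cn Y A * (Cn X Z + Cn X V * Cn Z V) + c * (Cn Y V * Cn X Z - Cn X V * Cn Y Z)"
proof -
  have 1: "Cn Z (\<lambda>k. A i * (V j * V k + G j k) - A j * (V i * V k + G i k) + c * (V j * G i k - V i * G j k))
     = A i * (V j * Cn Z V + Z j) - A j * (V i * Cn Z V + Z i) + c * (V j * Z i - V i * Z j)" for i j
    by (simp only: Cn_add Cn_diff Cn_cmult Cn_multc Cn_G')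
  have 2: "Cn Y (\<lambda>j. A i * (V j * Cn Z V + Z j) - A j * (V i * Cn Z V + Z i) + c * (V j * Z i - V i * Z j))
     = A i * (Cn Y V * Cn Z V + Cn Y Z) - Cn Y A * (V i * Cn Z V + Z i) + c * (Cn Y V * Z i - V i * Cn Y Z)" for i
    by (simp only: Cn_add Cn_diff Cn_cmult Cn_multc)
  have 3: "Cn X (\<lambda>i. A i * (Cn Y V * Cn Z V + Cn Y Z) - Cn Y A * (V i * Cn Z V + Z i) + c * (Cn Y V * Z i - V i * Cn Y Z))
     = Cn X A * (Cn Y V * Cn Z V + Cn Y Z) - Cn Y A * (Cn X V * Cn Z V + Cn X Z) + c * (Cn Y V * Cn X Z - Cn X V * Cn Y Z)"
    by (simp only: Cn_add Cn_diff Cn_cmult Cn_multc)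
  show ?thesis unfolding 1 2 3 by (simp add: algebra_simps)
qed

end



lemma final_alg:
  fixes n C S P ph v a be la Q L RUU RBU RUW RBW X Y :: real
  assumes n: "n > 3" and CS: "C^2 = S^2 + 1" and C: "C > 0" and S: "S \<noteq> 0" and v: "v \<noteq> 0"
    and Q: "Q = C * a + S * be"
    and E1: "be * (0 + (- C) * S) - a * (1 + S * S) + la^2 * ((- C) * 1 - S * 0) = C * (v * (0 + (-1) * 0) - P * (1 + 0 * 0) + ph^2 * ((-1) * 1 - 0 * 0))"
    and RUU: "RUU = -1 * P + P - P * (-1 + n) + ph^2 * (n - 1) * (-1)"
    and RBU: "RBU = 0 * P + v - v * (-1 + n) + ph^2 * (n - 1) * 0"
    and RUW: "RUW = (- C) * Q + a - a * (-1 + n) + la^2 * (n - 1) * (- C)"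
    and RBW: "RBW = S * Q + be - be * (-1 + n) + la^2 * (n - 1) * S"
    and X: "X = (RUW - C * RUU) / S"
    and Y: "Y = RUU + (RBW - C * RBU) / S"
    and E2: "X = RBU"
  shows "S / C = - 2 * X / Y"
proof -
  have PQ: "P + ph^2 = Q + la^2"
  proof -
    have CC: "C * C = 1 + S * S" using CS by (simp add: power2_eq_square)
    have CCa: "C * (C * a) = a + S * (S * a)"
    proof -
      have "C * (C * a) = (C * C) * a" by simp
      also have "\<dots> = (1 + S * S) * a" by (simp only: CC)
      finally show ?thesis by (simp add: algebra_simps)
    qed
    have "C * (P + ph^2) = C * (Q + la^2)" using E1 Q CCa by (simp add: algebra_simps power2_eq_square)
    then show ?thesis using C by simp
  qed
  have X2: "RUW - C * RUU = S * RBU" using X E2 S by (simp add: field_simps)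
  have SY: "S * Y = S * RUU + RBW - C * RBU" using Y S by (simp add: field_simps)
  have key: "S * (S * RUU + RBW + C * RBU) = 0"
  proof -
    have "S * (S * RUU + RBW + C * RBU) = S^2 * RUU + S * RBW + C * (RUW - C * RUU)"
      using X2 by (simp add: algebra_simps power2_eq_square)
    also have "\<dots> = (S^2 - C^2) * RUU + S * RBW + C * RUW" by (simp add: algebra_simps power2_eq_square)
    also have "\<dots> = (n - 1) * (P + ph^2 - Q - la^2)"
      unfolding RUU RBW RUW using CS Q by (simp add: algebra_simps power2_eq_square) algebra
    also have "\<dots> = 0" using PQ by simp
    finally show ?thesis .
  qed
  then have k1: "S * RUU + RBW + C * RBU = 0" using S by simp
  have "S * Y = - 2 * (C * RBU)" using SY k1 by linarith
  then have k2: "S * Y = - 2 * C * X" using E2 by simp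
  have "RBU = (2 - n) * v" using RBU by (simp add: algebra_simps)
  moreover have "2 - n \<noteq> 0" using n by simp
  ultimately have RBUnz: "RBU \<noteq> 0" using v by simp
  have Ynz: "Y \<noteq> 0"
  proof
    assume "Y = 0"
    then have "C * X = 0" using k2 by simp
    then show False using C E2 RBUnz by simp
  qed
  show ?thesis using k2 Ynz C by (simp add: field_simps)
qed


lemma (in pt) Cn_div: "Cn Y (\<lambda>j. F j / c) = Cn Y F / c"
  using Cn_multc[of Y F "1/c"] by simp

lemma antisym_quad:
  fixes M :: "'n::finite \<Rightarrow> 'n \<Rightarrow> real"
  assumes "\<And>k m. M k m = - M m k"
  shows "(\<Sum>k\<in>UNIV. a k * (\<Sum>m\<in>UNIV. M k m * a m)) = 0"
proof -
  let ?s = "(\<Sum>k\<in>UNIV. \<Sum>m\<in>UNIV. a k * M k m * a m)"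
  have e: "(\<Sum>k\<in>UNIV. a k * (\<Sum>m\<in>UNIV. M k m * a m)) = ?s" by (simp add: sum_distrib_left mult_ac)
  have "?s = (\<Sum>m\<in>UNIV. \<Sum>k\<in>UNIV. a k * M k m * a m)" by (rule sum.swap)
  also have "\<dots> = (\<Sum>m\<in>UNIV. \<Sum>k\<in>UNIV. - (a m * M m k * a k))"
  proof (intro sum.cong refl)
    fix m k
    have "M k m = - M m k" by (rule assms)
    then show "a k * M k m * a m = - (a m * M m k * a k)" by simp
  qed
  also have "\<dots> = - ?s" by (simp add: sum_negf)
  finally have "?s = 0" by simp
  then show ?thesis using e by simp
qed

lemma sum_delta_r2: "(\<Sum>k\<in>UNIV. f k * (if m = k then 1 else 0)) = (f (m::'n::finite) :: real)"
proof -
  have "(\<Sum>k\<in>UNIV. f k * (if m = k then 1 else 0)) = (\<Sum>k\<in>UNIV. if m = k then f k else 0)"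
    by (rule sum.cong) auto
  then show ?thesis by simp
qed

context st_ctx begin

lemma T3_rm:
  assumes x: "x \<in> U"
  shows "(\<Sum>m\<in>UNIV. riem g i j k m x * raise g W x m) = (\<Sum>p\<in>UNIV. riem_mixed g i j k p x * W x p)"
proof -
  have "(\<Sum>m\<in>UNIV. riem g i j k m x * raise g W x m)
     = (\<Sum>m\<in>UNIV. \<Sum>p\<in>UNIV. \<Sum>l\<in>UNIV. riem_mixed g i j k p x * W x l * (g x p m * ginv g x m l))"
    unfolding riem_def raise_def by (simp add: sum_distrib_left sum_distrib_right mult_ac)
  also have "\<dots> = (\<Sum>p\<in>UNIV. \<Sum>m\<in>UNIV. \<Sum>l\<in>UNIV. riem_mixed g i j k p x * W x l * (g x p m * ginv g x m l))"
    by (rule sum.swap)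
  also have "\<dots> = (\<Sum>p\<in>UNIV. \<Sum>l\<in>UNIV. \<Sum>m\<in>UNIV. riem_mixed g i j k p x * W x l * (g x p m * ginv g x m l))"
    by (rule sum.cong[OF refl], rule sum.swap)
  also have "\<dots> = (\<Sum>p\<in>UNIV. \<Sum>l\<in>UNIV. riem_mixed g i j k p x * W x l * (if p = l then 1 else 0))"
    by (simp add: sum_distrib_left[symmetric] g_ginv[OF lor[OF x]] del: mult_cancel_left)
  also have "\<dots> = (\<Sum>p\<in>UNIV. riem_mixed g i j k p x * W x p)"
    by (rule sum.cong[OF refl]) (simp add: sum_delta_r2)
  finally show ?thesis .
qed

lemma Ric_T3:
  "(\<Sum>m\<in>UNIV. ricci g j m x * raise g W x m)
   = (\<Sum>i\<in>UNIV. \<Sum>k\<in>UNIV. ginv g x i k * (\<Sum>m\<in>UNIV. riem g i j k m x * raise g W x m))"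
proof -
  have "(\<Sum>m\<in>UNIV. ricci g j m x * raise g W x m)
     = (\<Sum>m\<in>UNIV. \<Sum>i\<in>UNIV. \<Sum>k\<in>UNIV. ginv g x i k * (riem g i j k m x * raise g W x m))"
    unfolding ricci_def by (simp add: sum_distrib_right sum_distrib_left mult_ac)
  also have "\<dots> = (\<Sum>i\<in>UNIV. \<Sum>m\<in>UNIV. \<Sum>k\<in>UNIV. ginv g x i k * (riem g i j k m x * raise g W x m))"
    by (rule sum.swap)
  also have "\<dots> = (\<Sum>i\<in>UNIV. \<Sum>k\<in>UNIV. \<Sum>m\<in>UNIV. ginv g x i k * (riem g i j k m x * raise g W x m))"
    by (rule sum.cong[OF refl], rule sum.swap)
  finally show ?thesis by (simp add: sum_distrib_left)
qed

lemma ricci_sym: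
  assumes x: "x \<in> U"
  shows "ricci g j m x = ricci g m j x"
proof -
  have ps: "riem g i j k m x = riem g k m i j x" for i j k m
    by (rule pair_sym_abs[of "\<lambda>i j k m. riem g i j k m x"])
       (auto intro: riem_antisym_ij riem_antisym_km[OF x] riem_bianchi[OF x])
  have "ricci g j m x = (\<Sum>i\<in>UNIV. \<Sum>k\<in>UNIV. ginv g x i k * riem g k m i j x)"
    unfolding ricci_def using ps by simp
  also have "\<dots> = (\<Sum>k\<in>UNIV. \<Sum>i\<in>UNIV. ginv g x i k * riem g k m i j x)" by (rule sum.swap)
  also have "\<dots> = ricci g m j x"
    unfolding ricci_def using ginv_sym[OF lor[OF x]] by simp
  finally show ?thesis .
qed

end



theorem mainTheorem8:
  fixes U :: "(real^'n::finite) set"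
    and g :: "real^'n \<Rightarrow> 'n \<Rightarrow> 'n \<Rightarrow> real"
    and u w b :: "real^'n \<Rightarrow> 'n \<Rightarrow> real"
    and phi lam v alpha :: "real^'n \<Rightarrow> real"
  assumes dim: "CARD('n) > 3"
    and st: "spacetime U g"
    and u_smooth: "\<forall>k. Cinf_on U (\<lambda>x. u x k)"
    and w_smooth: "\<forall>k. Cinf_on U (\<lambda>x. w x k)"
    and phi_smooth: "Cinf_on U phi"
    and lam_smooth: "Cinf_on U lam"
    and u_unit: "\<forall>x\<in>U. gdot g x (u x) (u x) = -1"
    and w_unit: "\<forall>x\<in>U. gdot g x (w x) (w x) = -1"
    and u_tf: "\<forall>x\<in>U. \<forall>i j. cov1 g u i j x = phi x * (u x i * u x j + g x i j)"
    and w_tf: "\<forall>x\<in>U. \<forall>i j. cov1 g w i j x = lam x * (w x i * w x j + g x i j)"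
    and dphi: "\<forall>x\<in>U. \<forall>k. pd k phi x
                 = - u x k * (\<Sum>m\<in>UNIV. raise g u x m * pd m phi x) + v x * b x k"
    and v_nz: "\<forall>x\<in>U. v x \<noteq> 0"
    and b_unit: "\<forall>x\<in>U. gdot g x (b x) (b x) = 1"
    and ub: "\<forall>x\<in>U. gdot g x (u x) (b x) = 0"
    and w_def: "\<forall>x\<in>U. \<forall>i. w x i = u x i * cosh (alpha x) + b x i * sinh (alpha x)"
    and alpha_nz: "\<forall>x\<in>U. alpha x \<noteq> 0"
  shows "\<forall>x\<in>U. tanh (alpha x) =
     - 2 * (\<Sum>i\<in>UNIV. \<Sum>j\<in>UNIV. ricci g i j x * raise g u x i * raise g b x j)
       / (\<Sum>i\<in>UNIV. \<Sum>j\<in>UNIV. ricci g i j x *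
            (raise g u x i * raise g u x j + raise g b x i * raise g b x j))"
proof
  fix x assume x: "x \<in> U"
  interpret S: st_ctx U g by unfold_locales (rule st)
  have L: "lorentzian_at g x" using S.lor[OF x] .
  interpret P: pt "g x" "ginv g x"
    by unfold_locales (rule S.gsym[OF x], rule ginv_sym[OF L], rule g_ginv[OF L])
  have uC: "\<And>k. Cinf_on U (\<lambda>y. u y k)" using u_smooth by blast
  have wC: "\<And>k. Cinf_on U (\<lambda>y. w y k)" using w_smooth by blast
  define C where "C = cosh (alpha x)"
  define Sh where "Sh = sinh (alpha x)"
  define n where "n = real CARD('n)"
  have Spos: "Sh \<noteq> 0" unfolding Sh_def using alpha_nz x
    by (metis linorder_neqE_linordered_idom sinh_real_neg_iff sinh_real_pos_iff order_less_irrefl)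
  have Cpos: "C > 0" unfolding C_def by simp
  have CS: "C^2 = Sh^2 + 1" unfolding C_def Sh_def by (rule cosh_square_eq)
  let ?U0 = "u x" and ?B0 = "b x" and ?W0 = "w x"
  let ?dp = "\<lambda>k. pd k phi x" and ?dl = "\<lambda>k. pd k lam x"
  have Cn_raise: "P.Cn (X x) F = (\<Sum>j\<in>UNIV. raise g X x j * F j)" for X F
    unfolding P.Cn_def raise_def by (simp add: sum_distrib_right sum_distrib_left mult_ac)
  have gdot_Cn: "gdot g x X Y = P.Cn Y X" for X Y
    unfolding P.Cn_def gdot_def by (simp add: mult_ac)
  have W0: "?W0 = (\<lambda>k. C * ?U0 k + Sh * ?B0 k)" using w_def x by (auto simp: C_def Sh_def mult_ac)
  have B0: "b x k = (w x k - C * u x k) / Sh" for k using W0 Spos by (simp add: fun_eq_iff field_simps)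
  have "gdot g x (u x) (u x) = - 1" using u_unit x by blast
  then have uu: "P.Cn ?U0 ?U0 = -1" unfolding gdot_Cn .
  have "gdot g x (w x) (w x) = - 1" using w_unit x by blast
  then have ww: "P.Cn ?W0 ?W0 = -1" unfolding gdot_Cn .
  have "gdot g x (b x) (b x) = 1" using b_unit x by blast
  then have bb: "P.Cn ?B0 ?B0 = 1" unfolding gdot_Cn .
  have "gdot g x (u x) (b x) = 0" using ub x by blast
  then have bu: "P.Cn ?B0 ?U0 = 0" unfolding gdot_Cn .
  have ub': "P.Cn ?U0 ?B0 = 0" using bu P.Cn_comm by metis
  have uw: "P.Cn ?U0 ?W0 = - C"
  proof -
    have "P.Cn ?U0 ?W0 = P.Cn ?W0 ?U0" by (rule P.Cn_comm)
    also have "\<dots> = C * P.Cn ?U0 ?U0 + Sh * P.Cn ?B0 ?U0" by (subst W0) (rule P.Cn_left_lin)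
    finally show ?thesis using uu bu by simp
  qed
  have bw: "P.Cn ?B0 ?W0 = Sh"
  proof -
    have "P.Cn ?B0 ?W0 = P.Cn ?W0 ?B0" by (rule P.Cn_comm)
    also have "\<dots> = C * P.Cn ?U0 ?B0 + Sh * P.Cn ?B0 ?B0" by (subst W0) (rule P.Cn_left_lin)
    finally show ?thesis using ub' bb by simp
  qed
  define Pp where "Pp = P.Cn ?U0 ?dp"
  have dp: "?dp = (\<lambda>k. - ?U0 k * Pp + v x * ?B0 k)"
    using dphi x unfolding Pp_def Cn_raise by auto
  have bdp: "P.Cn ?B0 ?dp = v x"
  proof -
    have "P.Cn ?B0 ?dp = P.Cn ?B0 (\<lambda>k. - ?U0 k * Pp + v x * ?B0 k)" using dp by simp
    also have "\<dots> = - P.Cn ?B0 ?U0 * Pp + v x * P.Cn ?B0 ?B0"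
      by (simp only: P.Cn_add P.Cn_cmult P.Cn_multc P.Cn_minus)
    finally show ?thesis using bu bb by simp
  qed
  have wdl: "P.Cn ?W0 ?dl = C * P.Cn ?U0 ?dl + Sh * P.Cn ?B0 ?dl"
    by (subst W0) (rule P.Cn_left_lin)
  define T3 where "T3 W i j k = (\<Sum>m\<in>UNIV. riem g i j k m x * raise g W x m)" for W i j k
  have T3u: "T3 u i j k = pd i phi x * (u x j * u x k + g x j k) - pd j phi x * (u x i * u x k + g x i k)
     + (phi x)^2 * (u x j * g x i k - u x i * g x j k)" for i j k
    unfolding T3_def S.T3_rm[OF x] by (rule S.torse_T[OF x uC phi_smooth u_tf])
  have T3w: "T3 w i j k = pd i lam x * (w x j * w x k + g x j k) - pd j lam x * (w x i * w x k + g x i k)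
     + (lam x)^2 * (w x j * g x i k - w x i * g x j k)" for i j k
    unfolding T3_def S.T3_rm[OF x] by (rule S.torse_T[OF x wC lam_smooth w_tf])
  have Ric: "(\<Sum>m\<in>UNIV. ricci g j m x * raise g W x m) = P.Tr (\<lambda>i k. T3 W i j k)" for W j
    unfolding S.Ric_T3 P.Tr_def T3_def ..
  define RicU where "RicU j = (\<Sum>m\<in>UNIV. ricci g j m x * raise g u x m)" for j
  define RicW where "RicW j = (\<Sum>m\<in>UNIV. ricci g j m x * raise g w x m)" for j
  define RicB where "RicB j = (\<Sum>m\<in>UNIV. ricci g j m x * raise g b x m)" for j
  have RicU: "RicU = (\<lambda>j. ?U0 j * P.Cn ?U0 ?dp + ?dp j - ?dp j * (P.Cn ?U0 ?U0 + n) + (phi x)^2 * (n - 1) * ?U0 j)"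
    unfolding RicU_def Ric T3u n_def using P.Tr_T[of ?dp ?U0 _ "(phi x)^2"] by simp
  have RicW: "RicW = (\<lambda>j. ?W0 j * P.Cn ?W0 ?dl + ?dl j - ?dl j * (P.Cn ?W0 ?W0 + n) + (lam x)^2 * (n - 1) * ?W0 j)"
    unfolding RicW_def Ric T3w n_def using P.Tr_T[of ?dl ?W0 _ "(lam x)^2"] by simp
  have raiseB: "raise g b x m = (raise g w x m - C * raise g u x m) / Sh" for m
    unfolding raise_def B0 by (simp add: sum_divide_distrib[symmetric] right_diff_distrib sum_subtractf sum_distrib_left mult_ac)
  have RicB: "RicB = (\<lambda>j. (RicW j - C * RicU j) / Sh)"
    unfolding RicB_def RicW_def RicU_def raiseB
    by (simp add: fun_eq_iff sum_divide_distrib[symmetric] right_diff_distrib sum_subtractf sum_distrib_left mult_ac)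
  have sym: "P.Cn ?U0 RicB = P.Cn ?B0 RicU"
  proof -
    have "P.Cn ?U0 RicB = (\<Sum>i\<in>UNIV. \<Sum>j\<in>UNIV. raise g u x i * ricci g i j x * raise g b x j)"
      unfolding Cn_raise RicB_def by (simp add: sum_distrib_left mult_ac)
    also have "\<dots> = (\<Sum>j\<in>UNIV. \<Sum>i\<in>UNIV. raise g u x i * ricci g i j x * raise g b x j)" by (rule sum.swap)
    also have "\<dots> = P.Cn ?B0 RicU"
      unfolding Cn_raise RicU_def using S.ricci_sym[OF x] by (simp add: sum_distrib_left mult_ac)
    finally show ?thesis .
  qed
  have T3lin: "T3 w i j k = C * T3 u i j k + Sh * T3 b i j k" for i j k
  proof -
    have "raise g w x m = C * raise g u x m + Sh * raise g b x m" for m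
      using raiseB[of m] Spos by (simp add: field_simps)
    then show ?thesis unfolding T3_def by (simp add: algebra_simps sum.distrib sum_distrib_left)
  qed
  have T3bb: "P.Cn ?B0 (\<lambda>k. T3 b i j k) = 0" for i j
    unfolding Cn_raise T3_def
    by (rule antisym_quad[of "\<lambda>k m. riem g i j k m x"]) (rule S.riem_antisym_km[OF x])
  have R4: "P.Cn ?B0 (\<lambda>i. P.Cn ?U0 (\<lambda>j. P.Cn ?B0 (\<lambda>k. T3 w i j k)))
      = C * P.Cn ?B0 (\<lambda>i. P.Cn ?U0 (\<lambda>j. P.Cn ?B0 (\<lambda>k. T3 u i j k)))"
  proof -
    have "P.Cn ?B0 (\<lambda>k. T3 w i j k) = C * P.Cn ?B0 (\<lambda>k. T3 u i j k)" for i j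
      unfolding T3lin by (simp only: P.Cn_add P.Cn_cmult T3bb; simp)
    then show ?thesis by (simp only: P.Cn_cmult)
  qed
  have R4u: "P.Cn ?B0 (\<lambda>i. P.Cn ?U0 (\<lambda>j. P.Cn ?B0 (\<lambda>k. T3 u i j k)))
     = P.Cn ?B0 ?dp * (P.Cn ?U0 ?B0 + P.Cn ?U0 ?U0 * P.Cn ?B0 ?U0) - P.Cn ?U0 ?dp * (P.Cn ?B0 ?B0 + P.Cn ?B0 ?U0 * P.Cn ?B0 ?U0)
       + (phi x)^2 * (P.Cn ?U0 ?U0 * P.Cn ?B0 ?B0 - P.Cn ?B0 ?U0 * P.Cn ?U0 ?B0)"
    unfolding T3u by (rule P.Cn3_T)
  have R4w: "P.Cn ?B0 (\<lambda>i. P.Cn ?U0 (\<lambda>j. P.Cn ?B0 (\<lambda>k. T3 w i j k)))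
     = P.Cn ?B0 ?dl * (P.Cn ?U0 ?B0 + P.Cn ?U0 ?W0 * P.Cn ?B0 ?W0) - P.Cn ?U0 ?dl * (P.Cn ?B0 ?B0 + P.Cn ?B0 ?W0 * P.Cn ?B0 ?W0)
       + (lam x)^2 * (P.Cn ?U0 ?W0 * P.Cn ?B0 ?B0 - P.Cn ?B0 ?W0 * P.Cn ?U0 ?B0)"
    unfolding T3w by (rule P.Cn3_T)
  have CnRicU: "P.Cn Y RicU = P.Cn Y ?U0 * P.Cn ?U0 ?dp + P.Cn Y ?dp - P.Cn Y ?dp * (P.Cn ?U0 ?U0 + n) + (phi x)^2 * (n - 1) * P.Cn Y ?U0" for Y
    unfolding RicU by (simp only: P.Cn_add P.Cn_diff P.Cn_cmult P.Cn_multc)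
  have CnRicW: "P.Cn Y RicW = P.Cn Y ?W0 * P.Cn ?W0 ?dl + P.Cn Y ?dl - P.Cn Y ?dl * (P.Cn ?W0 ?W0 + n) + (lam x)^2 * (n - 1) * P.Cn Y ?W0" for Y
    unfolding RicW by (simp only: P.Cn_add P.Cn_diff P.Cn_cmult P.Cn_multc)
  have CnRicB: "P.Cn Y RicB = (P.Cn Y RicW - C * P.Cn Y RicU) / Sh" for Y
    unfolding RicB by (simp only: P.Cn_div P.Cn_diff P.Cn_cmult)
  have num: "(\<Sum>i\<in>UNIV. \<Sum>j\<in>UNIV. ricci g i j x * raise g u x i * raise g b x j) = P.Cn ?U0 RicB"
    unfolding Cn_raise RicB_def by (simp add: sum_distrib_left mult_ac)
  have den: "(\<Sum>i\<in>UNIV. \<Sum>j\<in>UNIV. ricci g i j x * (raise g u x i * raise g u x j + raise g b x i * raise g b x j))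
     = P.Cn ?U0 RicU + P.Cn ?B0 RicB"
    unfolding Cn_raise RicB_def RicU_def by (simp add: sum_distrib_left algebra_simps sum.distrib)
  have hn: "n > 3" unfolding n_def using dim by simp
  have hv: "v x \<noteq> 0" using v_nz x by blast
  have hE1: "P.Cn ?B0 ?dl * (0 + - C * Sh) - P.Cn ?U0 ?dl * (1 + Sh * Sh) + (lam x)^2 * (- C * 1 - Sh * 0) =
        C * (v x * (0 + - 1 * 0) - Pp * (1 + 0 * 0) + (phi x)^2 * (- 1 * 1 - 0 * 0))"
    using R4 R4u R4w unfolding uu bb bu ub' uw bw bdp Pp_def[symmetric] by simp
  have hRUU: "P.Cn ?U0 RicU = - 1 * Pp + Pp - Pp * (- 1 + n) + (phi x)^2 * (n - 1) * - 1"
    unfolding CnRicU uu Pp_def ..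
  have hRBU: "P.Cn ?B0 RicU = 0 * Pp + v x - v x * (- 1 + n) + (phi x)^2 * (n - 1) * 0"
    unfolding CnRicU uu bu bdp Pp_def ..
  have hRUW: "P.Cn ?U0 RicW = - C * P.Cn ?W0 ?dl + P.Cn ?U0 ?dl - P.Cn ?U0 ?dl * (- 1 + n) + (lam x)^2 * (n - 1) * - C"
    unfolding CnRicW uw ww ..
  have hRBW: "P.Cn ?B0 RicW = Sh * P.Cn ?W0 ?dl + P.Cn ?B0 ?dl - P.Cn ?B0 ?dl * (- 1 + n) + (lam x)^2 * (n - 1) * Sh"
    unfolding CnRicW bw ww ..
  have hX: "P.Cn ?U0 RicB = (P.Cn ?U0 RicW - C * P.Cn ?U0 RicU) / Sh" by (rule CnRicB)
  have hY: "P.Cn ?U0 RicU + P.Cn ?B0 RicB = P.Cn ?U0 RicU + (P.Cn ?B0 RicW - C * P.Cn ?B0 RicU) / Sh"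
    using CnRicB by simp
  have fin: "Sh / C = - 2 * P.Cn ?U0 RicB / (P.Cn ?U0 RicU + P.Cn ?B0 RicB)"
    by (rule final_alg[OF hn CS Cpos Spos hv wdl hE1 hRUU hRBU hRUW hRBW hX hY sym])
  show "tanh (alpha x) =
     - 2 * (\<Sum>i\<in>UNIV. \<Sum>j\<in>UNIV. ricci g i j x * raise g u x i * raise g b x j)
       / (\<Sum>i\<in>UNIV. \<Sum>j\<in>UNIV. ricci g i j x *
            (raise g u x i * raise g u x j + raise g b x i * raise g b x j))"
    unfolding num den tanh_def using fin by (simp add: C_def Sh_def)
qed



end
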